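(* Let $\mathsf{X}=\mathsf{Y}=\mathbb{R}^d$ with probability measures $\mu,\nu$ and cost $c(x,y)=\|x-y\|^2$, let $\pi_\varepsilon$ be the $(c,\varepsilon)$-cyclically invariant coupling for each $\varepsilon>0$ (assumed to exist), and assume $\pi_\varepsilon\to\pi_*$ weakly as $\varepsilon\to0$ for some $\pi_*\in\Pi(\mu,\nu)$. Let $\Gamma:=\operatorname{spt}\pi_*$, $\mathsf{X}_0:=\operatorname{proj}_{\mathsf{X}}\Gamma$, $\mathsf{Y}_0:=\operatorname{proj}_{\mathsf{Y}}\Gamma$, and assume $\mathsf{X}_0$ is strictly convex. Consider $(x,y)\in(\mathsf{X}_0\times\mathsf{Y}_0)\setminus\Gamma$ with $x\in\partial\mathsf{X}_0$. Suppose that $\pi_*$ is given by a transport map $T:\mathsf{X}_0\to\mathbb{R}^d$ (i.e., $\Gamma=\{(x',T(x')):x'\in\mathsf{X}_0\}$) which is continuous on $B_r(x)\cap\mathsf{X}_0$ for some $r>0$. Then $I(x,y)>0$.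
   Context: $\mathsf{X}_0$ is strictly convex if for distinct $x,x'\in\mathsf{X}_0$ the open segment $(x,x')$ is contained in $\operatorname{Int}\mathsf{X}_0$. $\Pi(\mu,\nu)$ is the set of couplings and $P:=\mu\otimes\nu$. A coupling $\pi$ is $(c,\varepsilon)$-cyclically invariant if $\pi\sim P$ and its density admits a version $\frac{d\pi}{dP}:\mathsf{X}\times\mathsf{Y}\to(0,\infty)$ with $\prod_{i=1}^k\frac{d\pi}{dP}(x_i,y_i)=\exp\big(-\frac1\varepsilon[\sum_{i=1}^k c(x_i,y_i)-\sum_{i=1}^k c(x_i,y_{i+1})]\big)\prod_{i=1}^k\frac{d\pi}{dP}(x_i,y_{i+1})$ for all $k$ and points, $y_{k+1}:=y_1$. The function $I$ is $I(x,y):=\sup_{k\ge2}\sup_{(x_i,y_i)_{i=2}^k\subset\Gamma}\sup_{\sigma\in\Sigma(k)}\sum_{i=1}^k c(x_i,y_i)-\sum_{i=1}^k c(x_i,y_{\sigma(i)})$ with $(x_1,y_1):=(x,y)$ and $\Sigma(k)$ the permutations of $\{1,\dots,k\}$. $B_r(x)$ is the open ball. *)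

theory Defs
  imports "HOL-Probability.Probability" "HOL-Combinatorics.Permutations"
begin

definition coupling :: "'a measure \<Rightarrow> 'b measure \<Rightarrow> ('a \<times> 'b) measure \<Rightarrow> bool" where
  "coupling \<mu> \<nu> \<pi> \<longleftrightarrow> prob_space \<pi> \<and> sets \<pi> = sets (\<mu> \<Otimes>\<^sub>M \<nu>) \<and>
     distr \<pi> \<mu> fst = \<mu> \<and> distr \<pi> \<nu> snd = \<nu>"

definition cyclically_invariant ::
  "('a \<Rightarrow> 'b \<Rightarrow> real) \<Rightarrow> real \<Rightarrow> 'a measure \<Rightarrow> 'b measure \<Rightarrow> ('a \<times> 'b) measure \<Rightarrow> bool" where
  "cyclically_invariant c \<epsilon> \<mu> \<nu> \<pi> \<longleftrightarrow>
     absolutely_continuous (\<mu> \<Otimes>\<^sub>M \<nu>) \<pi> \<and> absolutely_continuous \<pi> (\<mu> \<Otimes>\<^sub>M \<nu>) \<and>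
     (\<exists>f :: 'a \<times> 'b \<Rightarrow> real.
        f \<in> borel_measurable (\<mu> \<Otimes>\<^sub>M \<nu>) \<and> (\<forall>z. f z > 0) \<and>
        \<pi> = density (\<mu> \<Otimes>\<^sub>M \<nu>) (\<lambda>z. ennreal (f z)) \<and>
        (\<forall>(k::nat) (xs :: nat \<Rightarrow> 'a) (ys :: nat \<Rightarrow> 'b).
           let ys' = (\<lambda>i. if i = k + 1 then ys 1 else ys i) in
           (\<Prod>i=1..k. f (xs i, ys i)) =
             exp (- (1 / \<epsilon>) * ((\<Sum>i=1..k. c (xs i) (ys i)) - (\<Sum>i=1..k. c (xs i) (ys' (i + 1)))))
             * (\<Prod>i=1..k. f (xs i, ys' (i + 1)))))"

definition weak_conv_at_zero :: "(real \<Rightarrow> 'a::topological_space measure) \<Rightarrow> 'a measure \<Rightarrow> bool" where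
  "weak_conv_at_zero \<pi>s \<pi> \<longleftrightarrow>
     (\<forall>g :: 'a \<Rightarrow> real. continuous_on UNIV g \<and> bounded (range g) \<longrightarrow>
        ((\<lambda>\<epsilon>. integral\<^sup>L (\<pi>s \<epsilon>) g) \<longlongrightarrow> integral\<^sup>L \<pi> g) (at_right 0))"

definition support :: "'a::topological_space measure \<Rightarrow> 'a set" where
  "support M = {z. \<forall>U. open U \<and> z \<in> U \<longrightarrow> emeasure M U > 0}"

definition strictly_convex_set :: "'a::real_normed_vector set \<Rightarrow> bool" where
  "strictly_convex_set X \<longleftrightarrow> (\<forall>x\<in>X. \<forall>x'\<in>X. x \<noteq> x' \<longrightarrow> open_segment x x' \<subseteq> interior X)"

definition I_fun :: "('a \<Rightarrow> 'b \<Rightarrow> real) \<Rightarrow> ('a \<times> 'b) set \<Rightarrow> 'a \<Rightarrow> 'b \<Rightarrow> ereal" where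
  "I_fun c \<Gamma> x y =
     (SUP p \<in> {(k, xs, ys, \<sigma>) | (k::nat) (xs::nat \<Rightarrow> 'a) (ys::nat \<Rightarrow> 'b) \<sigma>.
                 k \<ge> 2 \<and> xs 1 = x \<and> ys 1 = y \<and> (\<forall>i\<in>{2..k}. (xs i, ys i) \<in> \<Gamma>) \<and> \<sigma> permutes {1..k}}.
        (case p of (k, xs, ys, \<sigma>) \<Rightarrow>
           ereal ((\<Sum>i=1..k. c (xs i) (ys i)) - (\<Sum>i=1..k. c (xs i) (ys (\<sigma> i))))))"

end

theory Submission
  imports Defs
begin

lemma key_identity:
  fixes a b c d :: "'a::real_inner"
  shows "(norm (a-b))\<^sup>2 + (norm (c-d))\<^sup>2 - (norm (a-d))\<^sup>2 - (norm (c-b))\<^sup>2 = 2*((c-a) \<bullet> (b-d))"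
  by (simp add: power2_norm_eq_inner inner_diff_left inner_diff_right inner_commute algebra_simps)

lemma I_lower:
  fixes k :: nat
  assumes "k \<ge> 2" "xs 1 = x" "ys 1 = y" "\<forall>i\<in>{2..k}. (xs i, ys i) \<in> \<Gamma>" "\<sigma> permutes {1..k}"
  shows "ereal ((\<Sum>i=1..k. c (xs i) (ys i)) - (\<Sum>i=1..k. c (xs i) (ys (\<sigma> i)))) \<le> I_fun c \<Gamma> x y"
proof -
  have mem: "(k, xs, ys, \<sigma>) \<in> {(k, xs, ys, \<sigma>) | k xs ys \<sigma>.
                 k \<ge> 2 \<and> xs 1 = x \<and> ys 1 = y \<and> (\<forall>i\<in>{2..k}. (xs i, ys i) \<in> \<Gamma>) \<and> \<sigma> permutes {1..k}}"
    using assms by blast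
  show ?thesis unfolding I_fun_def
    using SUP_upper[OF mem, of "\<lambda>p. case p of (k, xs, ys, \<sigma>) \<Rightarrow>
           ereal ((\<Sum>i=1..k. c (xs i) (ys i)) - (\<Sum>i=1..k. c (xs i) (ys (\<sigma> i))))"]
    by simp
qed

lemma pair_val:
  assumes "(a, b) \<in> \<Gamma>"
  shows "ereal (c x y + c a b - c x b - c a y) \<le> I_fun c \<Gamma> x y"
proof -
  let ?xs = "\<lambda>i::nat. if i = 1 then x else a"
  let ?ys = "\<lambda>i::nat. if i = 1 then y else b"
  let ?s = "Transposition.transpose (1::nat) 2"
  have "?s permutes {1..2}" by (rule permutes_swap_id) auto
  from I_lower[of 2 ?xs x ?ys y \<Gamma> ?s c, OF _ _ _ _ this] assms
  have "ereal ((\<Sum>i=1..2. c (?xs i) (?ys i)) - (\<Sum>i=1..2. c (?xs i) (?ys (?s i)))) \<le> I_fun c \<Gamma> x y"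
    by auto
  moreover have "{1..2::nat} = {1,2}" by auto
  ultimately show ?thesis by (simp add: algebra_simps)
qed

lemma triple_val:
  assumes "(a, b) \<in> \<Gamma>" "(a', y) \<in> \<Gamma>"
  shows "ereal (c a b + c a' y - c a y - c a' b) \<le> I_fun c \<Gamma> x y"
proof -
  let ?xs = "\<lambda>i::nat. if i = 1 then x else if i = 2 then a else a'"
  let ?ys = "\<lambda>i::nat. if i = 1 then y else if i = 2 then b else y"
  let ?s = "Transposition.transpose (1::nat) 3 \<circ> Transposition.transpose 2 3"
  have "?s permutes {1..3}" by (intro permutes_compose permutes_swap_id) auto
  from I_lower[of 3 ?xs x ?ys y \<Gamma> ?s c, OF _ _ _ _ this] assms
  have "ereal ((\<Sum>i=1..3. c (?xs i) (?ys i)) - (\<Sum>i=1..3. c (?xs i) (?ys (?s i)))) \<le> I_fun c \<Gamma> x y"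
    by auto
  moreover have "{1..3::nat} = {1,2,3}" by auto
  ultimately show ?thesis by (simp add: algebra_simps)
qed
lemma cont_step:
  fixes T :: "'a::real_inner \<Rightarrow> 'a"
  assumes cont: "continuous_on (ball x r \<inter> X) T" and "r > 0" and "x \<in> X" and "z \<noteq> x"
    and seg: "open_segment x z \<subseteq> X" and pos: "(z - x) \<bullet> (y - T x) > 0"
  shows "\<exists>w\<in>X. (w - x) \<bullet> (y - T w) > 0"
proof -
  define q where "q = (z - x) \<bullet> (y - T x)"
  define n where "n = norm (z - x)"
  have n: "n > 0" using assms by (simp add: n_def)
  have q: "q > 0" using pos by (simp add: q_def)
  have "x \<in> ball x r \<inter> X" using assms by simp
  with cont obtain d where d: "d > 0" and
    dH: "\<And>w. w \<in> ball x r \<inter> X \<Longrightarrow> dist w x < d \<Longrightarrow> dist (T w) (T x) < q / n"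
    unfolding continuous_on_iff using q n by (metis divide_pos_pos)
  define t where "t = min (1/2) (min d r / (2 * n))"
  have t0: "t > 0" using d n \<open>r > 0\<close> by (simp add: t_def)
  have t1: "t < 1" by (simp add: t_def)
  have tn: "t * n < min d r"
  proof -
    have "t \<le> min d r / (2 * n)" by (simp add: t_def)
    hence "t * n \<le> (min d r / (2 * n)) * n" using n by (simp only: mult_right_mono less_imp_le)
    also have "\<dots> = min d r / 2" using n by simp
    also have "\<dots> < min d r" using d \<open>r > 0\<close> by (simp add: min_def)
    finally show ?thesis .
  qed
  define w where "w = x + t *\<^sub>R (z - x)"
  have "w = (1 - t) *\<^sub>R x + t *\<^sub>R z" by (simp add: w_def algebra_simps)
  hence "w \<in> open_segment x z" using t0 t1 assms by (auto simp: in_segment)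
  hence wX: "w \<in> X" using seg by auto
  have dw: "dist w x = t * n" using t0 by (simp add: w_def dist_norm n_def)
  hence "w \<in> ball x r" using tn by (simp add: dist_commute)
  hence "dist (T w) (T x) < q / n" using dH wX dw tn by auto
  hence Tn: "norm (T x - T w) * n < q" using n by (simp add: dist_norm norm_minus_commute field_simps)
  have "(z - x) \<bullet> (T x - T w) \<ge> - (norm (z - x) * norm (T x - T w))"
    using norm_cauchy_schwarz[of "-(z - x)" "T x - T w"] by (simp add: norm_minus_commute inner_minus_left del: minus_diff_eq)
  hence "(z - x) \<bullet> (T x - T w) > - q" using Tn by (simp add: n_def mult.commute)
  hence "(z - x) \<bullet> (y - T w) > 0"
    using q_def by (simp add: inner_diff_right)
  hence "(w - x) \<bullet> (y - T w) > 0" using t0 by (simp add: w_def)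
  thus ?thesis using wX by blast
qed


theorem lemma5p3:
  fixes \<mu> \<nu> :: "'a::euclidean_space measure"
    and \<pi>\<epsilon> :: "real \<Rightarrow> ('a \<times> 'a) measure"
    and \<pi>s :: "('a \<times> 'a) measure"
    and T :: "'a \<Rightarrow> 'a" and x y :: 'a and r :: real
  defines "c \<equiv> (\<lambda>a b :: 'a. (norm (a - b))\<^sup>2)"
  defines "\<Gamma> \<equiv> support \<pi>s"
  defines "X0 \<equiv> fst ` \<Gamma>"
  defines "Y0 \<equiv> snd ` \<Gamma>"
  assumes "prob_space \<mu>" and "sets \<mu> = sets borel"
    and "prob_space \<nu>" and "sets \<nu> = sets borel"
    and "\<And>\<epsilon>. \<epsilon> > 0 \<Longrightarrow> coupling \<mu> \<nu> (\<pi>\<epsilon> \<epsilon>) \<and> cyclically_invariant c \<epsilon> \<mu> \<nu> (\<pi>\<epsilon> \<epsilon>)"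
    and "coupling \<mu> \<nu> \<pi>s"
    and "weak_conv_at_zero \<pi>\<epsilon> \<pi>s"
    and "strictly_convex_set X0"
    and "(x, y) \<in> (X0 \<times> Y0) - \<Gamma>"
    and "x \<in> frontier X0"
    and "\<Gamma> = {(x', T x') | x'. x' \<in> X0}"
    and "r > 0" and "continuous_on (ball x r \<inter> X0) T"
  shows "I_fun c \<Gamma> x y > 0"
proof -
  have xX: "x \<in> X0" and yY: "y \<in> Y0" and xyG: "(x, y) \<notin> \<Gamma>" using assms(13) by auto
  have G: "\<And>a b. (a, b) \<in> \<Gamma> \<longleftrightarrow> a \<in> X0 \<and> b = T a" using assms(15) by auto
  obtain x' where x'X: "x' \<in> X0" and yT: "y = T x'"
    using yY G unfolding Y0_def by force
  have xTx: "(x, T x) \<in> \<Gamma>" using G xX by simp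
  have x'y: "(x', y) \<in> \<Gamma>" using G x'X yT by simp
  have yne: "y \<noteq> T x" using xyG G xX by auto
  hence xne: "x' \<noteq> x" using yT by auto
  define v where "v = y - T x"
  have v0: "v \<noteq> 0" using yne by (simp add: v_def)
  have sc: "\<And>a b. a \<in> X0 \<Longrightarrow> b \<in> X0 \<Longrightarrow> a \<noteq> b \<Longrightarrow> open_segment a b \<subseteq> X0"
    using assms(12) interior_subset unfolding strictly_convex_set_def by blast
  show ?thesis
  proof (cases "(x' - x) \<bullet> v < 0")
    case True
    have "ereal (c x (T x) + c x' y - c x y - c x' (T x)) \<le> I_fun c \<Gamma> x y"
      by (rule triple_val[OF xTx x'y])
    moreover have "c x (T x) + c x' y - c x y - c x' (T x) = 2 * ((x' - x) \<bullet> (T x - y))"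
      unfolding c_def using key_identity[of x "T x" x' y] by simp
    moreover have "(x' - x) \<bullet> (T x - y) > 0" using True
      by (simp add: v_def inner_diff_right)
    ultimately show ?thesis
      by (metis (no_types, lifting) ereal_less(2) less_le_trans mult_pos_pos zero_less_numeral)
  next
    case False
    define m where "m = midpoint x x'"
    have "m \<in> open_segment x x'" using xne by (simp add: m_def)
    hence "m \<in> interior X0" using assms(12) xX x'X xne[symmetric] unfolding strictly_convex_set_def by blast
    then obtain e where e: "e > 0" "ball m e \<subseteq> X0" by (auto simp: mem_interior)
    define z where "z = m + (e / (2 * norm v)) *\<^sub>R v"
    have "dist m z = e / 2" using v0 e by (simp add: z_def dist_norm)
    hence zX: "z \<in> X0" using e by auto
    have "m - x = (1/2) *\<^sub>R (x' - x)" by (simp add: m_def midpoint_def algebra_simps scaleR_add_left[symmetric])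
    hence mxv: "(m - x) \<bullet> v = (1/2) * ((x' - x) \<bullet> v)" by simp
    have "z - x = (m - x) + (e / (2 * norm v)) *\<^sub>R v" by (simp add: z_def)
    hence "(z - x) \<bullet> v = (m - x) \<bullet> v + (e / (2 * norm v)) * (v \<bullet> v)"
      by (simp only: inner_add_left inner_scaleR_left)
    hence "(z - x) \<bullet> v = (1/2) * ((x' - x) \<bullet> v) + (e / (2 * norm v)) * (v \<bullet> v)"
      using mxv by simp
    also have "(e / (2 * norm v)) * (v \<bullet> v) = e * norm v / 2"
      using v0 by (simp add: power2_norm_eq_inner[symmetric] power2_eq_square)
    finally have zeq: "(z - x) \<bullet> v = (1/2) * ((x' - x) \<bullet> v) + e * norm v / 2" .
    have "e * norm v > 0" using e v0 by simp
    hence zpos: "(z - x) \<bullet> (y - T x) > 0" using False zeq unfolding v_def[symmetric] by linarith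
    hence zne: "z \<noteq> x" by auto
    obtain w where wX: "w \<in> X0" and wpos: "(w - x) \<bullet> (y - T w) > 0"
      using cont_step[OF assms(17) assms(16) xX zne sc[OF xX zX zne[symmetric]] zpos] by blast
    have wG: "(w, T w) \<in> \<Gamma>" using G wX by simp
    have "ereal (c x y + c w (T w) - c x (T w) - c w y) \<le> I_fun c \<Gamma> x y"
      by (rule pair_val[OF wG])
    moreover have "c x y + c w (T w) - c x (T w) - c w y = 2 * ((w - x) \<bullet> (y - T w))"
      unfolding c_def using key_identity[of x y w "T w"] by simp
    ultimately show ?thesis using wpos
      by (metis (no_types, lifting) ereal_less(2) less_le_trans mult_pos_pos zero_less_numeral)
  qed
qed

end
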